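(* Let $\lambda \geq 2$ be an integer and let $H$ be a graph with $\lambda^2+2$ vertices having at least one isolated vertex. Then $\lambda_{\min}(\mathfrak{q}(H)) < -\lambda$.
   Context: A Hoffman graph is a graph whose vertices are labelled "fat" or "slim", such that fat vertices are pairwise non-adjacent and each fat vertex has at least one slim neighbour. If $A_s$ is the adjacency matrix of the subgraph induced on the slim vertices and $C$ is the slim-by-fat adjacency matrix, the special matrix is $S = A_s - CC^T$, and the eigenvalues of the Hoffman graph are those of $S$; $\lambda_{\min}$ denotes the smallest one. For a graph $H$, $\mathfrak{q}(H)$ is the Hoffman graph whose slim vertices induce $H$ and which has a single fat vertex adjacent to all vertices of $H$ (so its special matrix is $A(H) - J$, with $J$ the all-ones matrix). *)

theory Defs
  imports "Jordan_Normal_Form.Char_Poly"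
begin

definition simple_graph :: "nat \<Rightarrow> (nat \<Rightarrow> nat \<Rightarrow> bool) \<Rightarrow> bool" where
  "simple_graph n E \<longleftrightarrow> (\<forall>i<n. \<forall>j<n. E i j \<longleftrightarrow> E j i) \<and> (\<forall>i<n. \<not> E i i)"

definition adj_matrix :: "nat \<Rightarrow> (nat \<Rightarrow> nat \<Rightarrow> bool) \<Rightarrow> real mat" where
  "adj_matrix n E = mat n n (\<lambda>(i,j). if E i j then 1 else 0)"

definition isolated_vertex :: "nat \<Rightarrow> (nat \<Rightarrow> nat \<Rightarrow> bool) \<Rightarrow> nat \<Rightarrow> bool" where
  "isolated_vertex n E v \<longleftrightarrow> v < n \<and> (\<forall>u<n. \<not> E v u)"

text \<open>Special matrix of the Hoffman graph q(H): slim part A(H), one fat vertex adjacent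
  to all slim vertices, so S = A(H) - C C^T = A(H) - J.\<close>
definition special_matrix_q :: "nat \<Rightarrow> (nat \<Rightarrow> nat \<Rightarrow> bool) \<Rightarrow> real mat" where
  "special_matrix_q n E = adj_matrix n E - mat n n (\<lambda>_. 1)"

definition lambda_min :: "real mat \<Rightarrow> real" where
  "lambda_min S = Min {\<mu>. eigenvalue S \<mu>}"

end

theory Submission imports Defs "HOL-Analysis.Function_Topology" begin

lemma compact_box:
  fixes n :: nat
  shows "compact (Pi UNIV (\<lambda>i. if i < n then {-1..1::real} else {0}))"
proof -
  have "compactin (product_topology (\<lambda>i. euclidean) UNIV) (PiE UNIV (\<lambda>i. if i < n then {-1..1::real} else {0}))"
    by (subst compactin_PiE) auto
  then show ?thesis by (metis euclidean_product_topology compactin_euclidean_iff PiE_UNIV_domain)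
qed
lemma coord_cont: "continuous_on S (\<lambda>f :: nat \<Rightarrow> real. f i)"
  by (rule continuous_on_subset[OF continuous_on_product_coordinates]) simp

lemma closed_sphere_fun:
  fixes n :: nat
  shows "closed {f :: nat \<Rightarrow> real. (\<Sum>i<n. (f i)^2) = 1}"
proof -
  have "continuous_on UNIV (\<lambda>f :: nat \<Rightarrow> real. (\<Sum>i<n. (f i)^2))"
    by (intro continuous_on_sum continuous_on_power coord_cont)
  then show ?thesis
    by (rule closed_Collect_eq) (rule continuous_on_const)
qed

lemma cont_Q:
  fixes M :: "nat \<Rightarrow> nat \<Rightarrow> real"
  shows "continuous_on S (\<lambda>f :: nat \<Rightarrow> real. (\<Sum>i<n. \<Sum>j<n. M i j * f i * f j))"
  by (intro continuous_on_sum continuous_on_mult continuous_on_const coord_cont)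
lemma quad_zero:
  fixes a b :: real
  assumes h: "\<And>t. 0 \<le> a * t + b * t^2"
  shows "a = 0"
proof (rule ccontr)
  assume a: "a \<noteq> 0"
  define c where "c = \<bar>b\<bar> + 1"
  have c: "c > 0" "b - c < 0" unfolding c_def by auto
  have "0 \<le> a * (- a / c) + b * (- a / c)^2" by (rule h)
  also have "\<dots> = a^2 / c^2 * (b - c)"
    using c by (simp add: field_simps power2_eq_square)
  also have "\<dots> < 0"
    using a c by (intro mult_pos_neg) auto
  finally show False by simp
qed

definition QF :: "nat \<Rightarrow> (nat \<Rightarrow> nat \<Rightarrow> real) \<Rightarrow> (nat \<Rightarrow> real) \<Rightarrow> real" where
  "QF n M z = (\<Sum>i<n. \<Sum>j<n. M i j * z i * z j)"

definition NF :: "nat \<Rightarrow> (nat \<Rightarrow> real) \<Rightarrow> real" where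
  "NF n z = (\<Sum>i<n. (z i)^2)"

lemma QF_expand:
  "QF n M (\<lambda>i. x i + t * y i) = QF n M x + t * (\<Sum>i<n. \<Sum>j<n. M i j * x i * y j)
     + t * (\<Sum>i<n. \<Sum>j<n. M i j * y i * x j) + t^2 * QF n M y"
proof -
  have "\<And>i j. M i j * (x i + t * y i) * (x j + t * y j) =
     M i j * x i * x j + t * (M i j * x i * y j) + t * (M i j * y i * x j) + t^2 * (M i j * y i * y j)"
    by (simp add: algebra_simps power2_eq_square)
  then show ?thesis
    unfolding QF_def by (simp add: sum.distrib sum_distrib_left)
qed

lemma NF_expand:
  "NF n (\<lambda>i. x i + t * y i) = NF n x + t * (2 * (\<Sum>i<n. x i * y i)) + t^2 * NF n y"
proof -
  have "\<And>i. (x i + t * y i)^2 = (x i)^2 + t * (2 * (x i * y i)) + t^2 * (y i)^2"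
    by (simp add: algebra_simps power2_eq_square)
  then show ?thesis
    unfolding NF_def by (simp add: sum.distrib sum_distrib_left)
qed

lemma QF_swap:
  fixes M :: "nat \<Rightarrow> nat \<Rightarrow> real"
  assumes sym: "\<And>i j. i<n \<Longrightarrow> j<n \<Longrightarrow> M i j = M j i"
  shows "(\<Sum>i<n. \<Sum>j<n. M i j * y i * x j) = (\<Sum>i<n. \<Sum>j<n. M i j * x i * y j)"
proof -
  have "(\<Sum>i<n. \<Sum>j<n. M i j * y i * x j) = (\<Sum>j<n. \<Sum>i<n. M i j * y i * x j)"
    by (rule sum.swap)
  also have "\<dots> = (\<Sum>i<n. \<Sum>j<n. M i j * x i * y j)"
    apply (intro sum.cong refl)
    apply (subst sym, simp, simp)
    by (simp add: mult_ac)
  finally show ?thesis .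
qed

lemma rayleigh:
  fixes M :: "nat \<Rightarrow> nat \<Rightarrow> real"
  assumes sym: "\<And>i j. i<n \<Longrightarrow> j<n \<Longrightarrow> M i j = M j i" and n: "0 < n"
  obtains x \<mu> where "\<exists>k<n. x k \<noteq> 0" "\<And>k. k<n \<Longrightarrow> (\<Sum>i<n. M k i * x i) = \<mu> * x k"
    "\<And>z. \<mu> * NF n z \<le> QF n M z"
proof -
  define K where "K = Pi UNIV (\<lambda>i. if i<n then {-1..1::real} else {0}) \<inter> {f. (\<Sum>i<n. (f i)^2) = 1}"
  have cK: "compact K" unfolding K_def
    using compact_box closed_sphere_fun by (rule compact_Int_closed)
  have e0: "(\<Sum>i<n. ((if i = 0 then 1::real else 0))^2) = 1"
  proof -
    have "(\<Sum>i<n. ((if i = 0 then 1::real else 0))^2) = (\<Sum>i<n. (if i = 0 then 1::real else 0))"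
      by (intro sum.cong) auto
    also have "\<dots> = 1" using n by simp
    finally show ?thesis .
  qed
  have "(\<lambda>i. if i = 0 then 1::real else 0) \<in> K"
    using n e0 unfolding K_def by auto
  then have neK: "K \<noteq> {}" by auto
  obtain x where xK: "x \<in> K" and xmin: "\<And>y. y \<in> K \<Longrightarrow> QF n M x \<le> QF n M y"
    using continuous_attains_inf[OF cK neK cont_Q[where S=K and n=n and M=M]] unfolding QF_def by blast
  define \<mu> where "\<mu> = QF n M x"
  have Nx: "NF n x = 1" using xK unfolding K_def NF_def by auto
  have main: "\<mu> * NF n z \<le> QF n M z" for z
  proof (cases "NF n z = 0")
    case True
    then have "\<forall>i\<in>{..<n}. (z i)^2 = 0"
      unfolding NF_def by (subst sum_nonneg_eq_0_iff[symmetric]) auto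
    then have "QF n M z = 0" unfolding QF_def by simp
    then show ?thesis using True by simp
  next
    case False
    have Npos: "NF n z > 0" using False unfolding NF_def
      by (metis (no_types, lifting) less_eq_real_def sum_nonneg zero_le_power2)
    define s where "s = sqrt (NF n z)"
    have s: "s > 0" "s^2 = NF n z" using Npos unfolding s_def by auto
    define f where "f = (\<lambda>i. if i < n then z i / s else 0)"
    have Nf: "NF n f = 1"
    proof -
      have "NF n f = (\<Sum>i<n. (z i)^2 / s^2)"
        unfolding NF_def f_def by (intro sum.cong refl) (simp add: power_divide)
      also have "\<dots> = NF n z / s^2" unfolding NF_def by (simp add: sum_divide_distrib)
      finally show ?thesis using s Npos by simp
    qed
    have Qf: "QF n M f = QF n M z / s^2"
    proof -
      have "QF n M f = (\<Sum>i<n. \<Sum>j<n. M i j * z i * z j / s^2)"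
        unfolding QF_def f_def by (intro sum.cong refl) (simp add: power2_eq_square)
      also have "\<dots> = QF n M z / s^2" unfolding QF_def by (simp add: sum_divide_distrib)
      finally show ?thesis .
    qed
    have "f \<in> K"
    proof -
      have bnd: "\<bar>f i\<bar> \<le> 1" if "i < n" for i
      proof -
        have "(f i)^2 \<le> NF n f" unfolding NF_def
          using that by (intro member_le_sum) auto
        then have "(f i)^2 \<le> 1^2" using Nf by simp
        then show ?thesis using abs_le_square_iff[of "f i" 1] by simp
      qed
      have fb: "f i \<in> (if i<n then {-1..1} else {0})" for i
      proof (cases "i < n")
        case True
        then have "\<bar>f i\<bar> \<le> 1" by (rule bnd)
        then show ?thesis using True by (simp add: abs_le_iff)
      next
        case False
        then show ?thesis by (simp add: f_def)
      qed
      show ?thesis using Nf fb unfolding K_def NF_def by auto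
    qed
    then have "\<mu> \<le> QF n M z / s^2" using xmin[of f] Qf unfolding \<mu>_def by simp
    then show ?thesis using s Npos by (simp add: pos_le_divide_eq)
  qed
  define B where "B y = (\<Sum>i<n. \<Sum>j<n. M i j * x i * y j)" for y
  define D where "D y = (\<Sum>i<n. x i * y i)" for y
  have BD: "B y = \<mu> * D y" for y
  proof -
    have "0 \<le> (2 * B y - 2 * \<mu> * D y) * t + (QF n M y - \<mu> * NF n y) * t^2" for t
    proof -
      have sw: "(\<Sum>i<n. \<Sum>j<n. M i j * y i * x j) = B y"
        unfolding B_def by (rule QF_swap[OF sym])
      have "\<mu> * NF n (\<lambda>i. x i + t * y i) \<le> QF n M (\<lambda>i. x i + t * y i)" by (rule main)
      then have "\<mu> * (1 + t * (2 * D y) + t^2 * NF n y) \<le> \<mu> + t * B y + t * B y + t^2 * QF n M y"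
        unfolding QF_expand NF_expand sw Nx \<mu>_def[symmetric] B_def[symmetric] D_def .
      then show ?thesis by (simp add: algebra_simps)
    qed
    then have "2 * B y - 2 * \<mu> * D y = 0" by (rule quad_zero)
    then show ?thesis by simp
  qed
  show ?thesis
  proof (rule that[of x \<mu>])
    show "\<exists>k<n. x k \<noteq> 0"
    proof (rule ccontr)
      assume "\<not> (\<exists>k<n. x k \<noteq> 0)"
      then have "NF n x = 0" unfolding NF_def by simp
      then show False using Nx by simp
    qed
  next
    fix k assume k: "k < n"
    define y where "y = (\<lambda>i. if i = k then 1::real else 0)"
    have "B y = (\<Sum>i<n. M i k * x i)"
      unfolding B_def y_def using k by (simp add: if_distrib cong: if_cong)
    moreover have "D y = x k" unfolding D_def y_def using k by (simp add: if_distrib cong: if_cong)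
    ultimately have "(\<Sum>i<n. M i k * x i) = \<mu> * x k" using BD[of y] by simp
    moreover have "(\<Sum>i<n. M k i * x i) = (\<Sum>i<n. M i k * x i)"
      using k by (intro sum.cong refl) (simp add: sym)
    ultimately show "(\<Sum>i<n. M k i * x i) = \<mu> * x k" by simp
  next
    fix z show "\<mu> * NF n z \<le> QF n M z" by (rule main)
  qed
qed
lemma sum_ind: "v < (n::nat) \<Longrightarrow> (\<Sum>i<n. (if i = v then c else 0::real)) = c"
  using sum.delta[of "{..<n}" v "\<lambda>_. c"] by simp

theorem mainTheorem3:
  fixes lam :: nat and E :: "nat \<Rightarrow> nat \<Rightarrow> bool"
  assumes "lam \<ge> 2"
    and "simple_graph (lam^2 + 2) E"
    and "\<exists>v. isolated_vertex (lam^2 + 2) E v"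
  shows "lambda_min (special_matrix_q (lam^2 + 2) E) < - real lam"
proof -
  define n where "n = lam^2 + 2"
  define L where "L = real lam"
  have nL: "real n = L^2 + 2" unfolding n_def L_def by simp
  have L2: "L \<ge> 2" using assms(1) unfolding L_def by simp
  obtain v where v: "isolated_vertex n E v" using assms(3) unfolding n_def by blast
  have vn: "v < n" and iso: "\<And>u. u < n \<Longrightarrow> \<not> E v u" using v unfolding isolated_vertex_def by auto
  have symE: "\<And>i j. i < n \<Longrightarrow> j < n \<Longrightarrow> E i j \<longleftrightarrow> E j i"
   and irr: "\<And>i. i < n \<Longrightarrow> \<not> E i i" using assms(2) unfolding simple_graph_def n_def by auto
  define M where "M i j = (if E i j then 1 else 0) - (1::real)" for i j
  have symM: "\<And>i j. i<n \<Longrightarrow> j<n \<Longrightarrow> M i j = M j i" unfolding M_def using symE by simp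
  obtain x \<mu> where xnz: "\<exists>k<n. x k \<noteq> 0"
    and ev: "\<And>k. k<n \<Longrightarrow> (\<Sum>i<n. M k i * x i) = \<mu> * x k"
    and ray: "\<And>z. \<mu> * NF n z \<le> QF n M z"
    using rayleigh[of n M, OF symM] vn by auto
  define S where "S = special_matrix_q n E"
  have S: "S \<in> carrier_mat n n" unfolding S_def special_matrix_q_def adj_matrix_def by auto
  have Sij: "S $$ (k, i) = M k i" if "k < n" "i < n" for k i
    using that unfolding S_def special_matrix_q_def adj_matrix_def M_def by simp
  have eigS: "eigenvalue S \<mu>"
    unfolding eigenvalue_def eigenvector_def
  proof (intro exI[of _ "vec n x"] conjI)
    show "vec n x \<in> carrier_vec (dim_row S)" using S by simp
    show "vec n x \<noteq> 0\<^sub>v (dim_row S)"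
    proof
      assume "vec n x = 0\<^sub>v (dim_row S)"
      then have "\<And>k. k < n \<Longrightarrow> x k = 0" using S by (metis carrier_matD(1) index_vec index_zero_vec(1))
      then show False using xnz by blast
    qed
    show "S *\<^sub>v vec n x = \<mu> \<cdot>\<^sub>v vec n x"
    proof (rule eq_vecI)
      fix k assume "k < dim_vec (\<mu> \<cdot>\<^sub>v vec n x)"
      then have k: "k < n" by simp
      have "(S *\<^sub>v vec n x) $ k = (\<Sum>i\<in>{0..<n}. S $$ (k, i) * x i)"
        using S k by (simp add: mult_mat_vec_def scalar_prod_def)
      also have "\<dots> = (\<Sum>i<n. M k i * x i)"
        by (simp add: lessThan_atLeast0 Sij k)
      also have "\<dots> = \<mu> * x k" by (rule ev[OF k])
      finally show "(S *\<^sub>v vec n x) $ k = (\<mu> \<cdot>\<^sub>v vec n x) $ k" using k by simp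
    qed (use S in simp)
  qed
  have fin: "finite {\<mu>. eigenvalue S \<mu>}"
  proof -
    have "char_poly S \<noteq> 0" using degree_monic_char_poly[OF S] by auto
    then have "finite {\<mu>. poly (char_poly S) \<mu> = 0}" by (rule poly_roots_finite)
    moreover have "{\<mu>. eigenvalue S \<mu>} \<subseteq> {\<mu>. poly (char_poly S) \<mu> = 0}"
      using eigenvalue_root_char_poly[OF S] by auto
    ultimately show ?thesis by (rule finite_subset[rotated])
  qed
  have minle: "lambda_min S \<le> \<mu>"
    unfolding lambda_min_def using fin eigS by (intro Min_le) auto
  define z where "z i = (if i = v then L else 1)" for i
  define w where "w i = (if i = v then 0 else (1::real))" for i
  have sz: "(\<Sum>i<n. z i) = L + (real n - 1)"
  proof -
    have "(\<Sum>i<n. z i) = (\<Sum>i<n. 1 + (if i = v then L - 1 else 0))"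
      unfolding z_def by (intro sum.cong) auto
    also have "\<dots> = real n + (L - 1)" using vn by (simp add: sum.distrib sum_ind)
    finally show ?thesis by simp
  qed
  have sw: "(\<Sum>i<n. w i) = real n - 1"
  proof -
    have "(\<Sum>i<n. w i) = (\<Sum>i<n. 1 + (if i = v then - 1 else 0))"
      unfolding w_def by (intro sum.cong) auto
    also have "\<dots> = real n - 1" using vn by (simp add: sum.distrib sum_ind)
    finally show ?thesis by simp
  qed
  have sw2: "(\<Sum>i<n. \<Sum>j<n. (if i = j then (w i)^2 else 0)) = real n - 1"
  proof -
    have "(\<Sum>i<n. \<Sum>j<n. (if i = j then (w i)^2 else 0)) = (\<Sum>i<n. w i)"
      by (intro sum.cong refl) (simp add: w_def)
    then show ?thesis using sw by simp
  qed
  have NFz: "NF n z = L^2 + (real n - 1)"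
  proof -
    have "NF n z = (\<Sum>i<n. 1 + (if i = v then L^2 - 1 else 0))"
      unfolding NF_def z_def by (intro sum.cong) auto
    also have "\<dots> = real n + (L^2 - 1)" using vn by (simp add: sum.distrib sum_ind)
    finally show ?thesis by simp
  qed
  have tm: "(if E i j then 1 else 0) * z i * z j \<le> w i * w j - (if i = j then (w i)^2 else 0)"
    if "i < n" "j < n" for i j
    using that iso[of j] iso[of i] symE[of i v] irr[of i] vn unfolding z_def w_def by auto
  have "QF n M z = (\<Sum>i<n. \<Sum>j<n. (if E i j then 1 else 0) * z i * z j) - (\<Sum>i<n. \<Sum>j<n. z i * z j)"
    unfolding QF_def M_def by (simp add: algebra_simps sum_subtractf)
  also have "\<dots> \<le> (\<Sum>i<n. \<Sum>j<n. w i * w j - (if i = j then (w i)^2 else 0)) - (\<Sum>i<n. \<Sum>j<n. z i * z j)"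
    using tm by (intro diff_right_mono sum_mono) auto
  also have "\<dots> = (\<Sum>i<n. w i) * (\<Sum>j<n. w j) - (real n - 1) - (\<Sum>i<n. z i) * (\<Sum>j<n. z j)"
    using sw2 by (simp add: sum_subtractf sum_product)
  also have "\<dots> = (real n - 1)^2 - (real n - 1) - (L + (real n - 1))^2"
    using sw sz by (simp add: power2_eq_square)
  finally have Qz: "QF n M z \<le> (real n - 1)^2 - (real n - 1) - (L + (real n - 1))^2" .
  have key: "\<mu> * (2 * L^2 + 1) \<le> - 2 * L^3 - 2 * L^2 - 2 * L - 1"
    using ray[of z] Qz NFz nL by (simp add: power2_eq_square power3_eq_cube algebra_simps)
  have "\<mu> < - L"
  proof (rule ccontr)
    assume "\<not> \<mu> < - L"
    then have "- L * (2 * L^2 + 1) \<le> \<mu> * (2 * L^2 + 1)"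
      by (intro mult_right_mono) auto
    then have "- L * (2 * L^2 + 1) \<le> - 2 * L^3 - 2 * L^2 - 2 * L - 1" using key by linarith
    moreover have "- L * (2 * L^2 + 1) = - 2 * L^3 - L" by (simp add: algebra_simps power3_eq_cube power2_eq_square)
    moreover have "L^2 \<ge> 0" by simp
    ultimately show False using L2 by linarith
  qed
  then show ?thesis using minle unfolding S_def n_def L_def by simp
qed
end
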